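(* Let $(G,\mathcal{T},(A^\circ,B^\circ),k)$ be a Terminal Separation instance, let $\mathcal{T}'$ be the set of terminal pairs disjoint from $A^\circ\cup B^\circ$, and let $\{s,t\}\in\mathcal{T}'$. Let $\mathcal{F}$ be the family of all maximal terminal separations of minimum cost among terminal separations extending $(A^\circ\cup\{s\},B^\circ\cup\{t\})$, and suppose that no separation in $\mathcal{F}$ contains in the union of its two sides any terminal pair of $\mathcal{T}'$ other than $\{s,t\}$. Then there exists a unique maximal terminal separation $(A_s^{\max},B_t^{\min})$ such that $A_s^{\max}\supseteq A_s$ and $B_t^{\min}\subseteq B_t$ for every $(A_s,B_t)\in\mathcal{F}$. Moreover, if $A$ is a set with $A^\circ\cup\{s\}\subseteq A$, $A\cap B^\circ=\emptyset$, $A\cap\bigcup\mathcal{T}'\subseteq\{s\}$ and $A\setminus A_s^{\max}\ne\emptyset$, then $d(A)>d(A_s^{\max})$.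
   Context: Graphs may have multiple edges but no loops; $d(X)$ is the number of edges with exactly one endpoint in $X$. For a family $\mathcal{T}$ of pairwise disjoint vertex pairs (terminals are their vertices), a terminal separation is a pair $(A,B)$ of disjoint vertex sets such that each pair in $\mathcal{T}$ either has one vertex in $A$ and one in $B$ or is disjoint from $A\cup B$; $(A',B')$ extends $(A,B)$ if $A\subseteq A'$, $B\subseteq B'$; cost $c(A,B)=(d(A)+d(B))/2$; a terminal separation is maximal if every other terminal separation extending it has strictly larger cost. A Terminal Separation instance $(G,\mathcal{T},(A^\circ,B^\circ),k)$ has every terminal of degree at most one and $(A^\circ,B^\circ)$ a terminal separation. $\bigcup\mathcal{T}'$ denotes the set of all terminals of pairs in $\mathcal{T}'$. *)

theory Defs
  imports Complex_Main "HOL-Library.Multiset"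
begin

text \<open>A multigraph without loops: finite vertex set V and a multiset E of edges,
  each edge being a 2-element subset of V (multiple edges = multiplicity in E).\<close>
definition graph :: "'a set \<Rightarrow> 'a set multiset \<Rightarrow> bool" where
  "graph V E \<longleftrightarrow> finite V \<and> (\<forall>e \<in># E. e \<subseteq> V \<and> card e = 2)"

definition dcut :: "'a set multiset \<Rightarrow> 'a set \<Rightarrow> nat" where
  "dcut E X = size (filter_mset (\<lambda>e. card (e \<inter> X) = 1) E)"

definition degree :: "'a set multiset \<Rightarrow> 'a \<Rightarrow> nat" where
  "degree E v = size (filter_mset (\<lambda>e. v \<in> e) E)"

definition terminal_family :: "'a set \<Rightarrow> 'a set set \<Rightarrow> bool" where
  "terminal_family V T \<longleftrightarrow>
     (\<forall>p \<in> T. p \<subseteq> V \<and> card p = 2) \<and> (\<forall>p \<in> T. \<forall>q \<in> T. p \<noteq> q \<longrightarrow> p \<inter> q = {})"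

definition terminal_sep :: "'a set \<Rightarrow> 'a set set \<Rightarrow> 'a set \<Rightarrow> 'a set \<Rightarrow> bool" where
  "terminal_sep V T A B \<longleftrightarrow> A \<subseteq> V \<and> B \<subseteq> V \<and> A \<inter> B = {} \<and>
     (\<forall>p \<in> T. (card (p \<inter> A) = 1 \<and> card (p \<inter> B) = 1) \<or> p \<inter> (A \<union> B) = {})"

definition cost :: "'a set multiset \<Rightarrow> 'a set \<Rightarrow> 'a set \<Rightarrow> real" where
  "cost E A B = (real (dcut E A) + real (dcut E B)) / 2"

definition maximal_sep :: "'a set \<Rightarrow> 'a set set \<Rightarrow> 'a set multiset \<Rightarrow> 'a set \<Rightarrow> 'a set \<Rightarrow> bool" where
  "maximal_sep V T E A B \<longleftrightarrow> terminal_sep V T A B \<and>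
     (\<forall>A' B'. terminal_sep V T A' B' \<and> A \<subseteq> A' \<and> B \<subseteq> B' \<and> (A', B') \<noteq> (A, B)
        \<longrightarrow> cost E A' B' > cost E A B)"

text \<open>Terminal Separation instance (the budget k plays no role in the statement).\<close>
definition TS_instance :: "'a set \<Rightarrow> 'a set multiset \<Rightarrow> 'a set set \<Rightarrow> 'a set \<Rightarrow> 'a set \<Rightarrow> nat \<Rightarrow> bool" where
  "TS_instance V E T A0 B0 k \<longleftrightarrow> graph V E \<and> terminal_family V T \<and>
     (\<forall>v \<in> \<Union>T. degree E v \<le> 1) \<and> terminal_sep V T A0 B0"

definition min_max_seps :: "'a set \<Rightarrow> 'a set set \<Rightarrow> 'a set multiset \<Rightarrow> 'a set \<Rightarrow> 'a set \<Rightarrow> ('a set \<times> 'a set) set" where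
  "min_max_seps V T E A B = {(A', B'). maximal_sep V T E A' B' \<and> A \<subseteq> A' \<and> B \<subseteq> B' \<and>
     (\<forall>A'' B''. terminal_sep V T A'' B'' \<and> A \<subseteq> A'' \<and> B \<subseteq> B'' \<longrightarrow> cost E A' B' \<le> cost E A'' B'')}"

end

theory Submission
  imports Defs
begin

lemma size_filter_ineq:
  assumes "\<And>e. e \<in># E \<Longrightarrow> (if R e then 1 else 0) + (if S e then 1 else 0)
     \<le> (if P e then 1 else 0) + (if Q e then (1::nat) else 0)"
  shows "size (filter_mset R E) + size (filter_mset S E) \<le> size (filter_mset P E) + size (filter_mset Q E)"
  using assms
proof (induction E)
  case empty then show ?case by simp
next
  case (add x E)
  have "size (filter_mset R E) + size (filter_mset S E) \<le> size (filter_mset P E) + size (filter_mset Q E)"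
    using add by auto
  moreover have "(if R x then 1 else 0) + (if S x then 1 else 0)
     \<le> (if P x then 1 else 0) + (if Q x then (1::nat) else 0)" using add by auto
  ultimately show ?case by (auto split: if_splits)
qed

lemma card2_int: assumes "a \<noteq> b" shows "card ({a,b} \<inter> Z) = 1 \<longleftrightarrow> ((a \<in> Z) \<noteq> (b \<in> Z))"
proof (cases "a \<in> Z"; cases "b \<in> Z")
qed (use assms in \<open>auto simp: Int_insert_left\<close>)

lemma dcut_sub:
  assumes "\<forall>e \<in># E. card e = 2"
  shows "dcut E (X \<union> Y) + dcut E (X \<inter> Y) \<le> dcut E X + dcut E Y"
  unfolding dcut_def
proof (rule size_filter_ineq)
  fix e assume "e \<in># E"
  then have "card e = 2" using assms by auto
  then obtain a b where e: "e = {a,b}" "a \<noteq> b" by (meson card_2_iff)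
  show "(if card (e \<inter> (X \<union> Y)) = 1 then 1 else 0) + (if card (e \<inter> (X \<inter> Y)) = 1 then 1 else 0)
     \<le> (if card (e \<inter> X) = 1 then 1 else 0) + (if card (e \<inter> Y) = 1 then (1::nat) else 0)"
    unfolding e card2_int[OF e(2)] by auto
qed

lemma dcut_posi:
  assumes "\<forall>e \<in># E. card e = 2"
  shows "dcut E (X - Y) + dcut E (Y - X) \<le> dcut E X + dcut E Y"
  unfolding dcut_def
proof (rule size_filter_ineq)
  fix e assume "e \<in># E"
  then have "card e = 2" using assms by auto
  then obtain a b where e: "e = {a,b}" "a \<noteq> b" by (meson card_2_iff)
  show "(if card (e \<inter> (X - Y)) = 1 then 1 else 0) + (if card (e \<inter> (Y - X)) = 1 then 1 else 0)
     \<le> (if card (e \<inter> X) = 1 then 1 else 0) + (if card (e \<inter> Y) = 1 then (1::nat) else 0)"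
    unfolding e card2_int[OF e(2)] by auto
qed

lemma pair_cover:
  assumes "card p = 2" "card (p \<inter> X) = 1" "card (p \<inter> Y) = 1" "X \<inter> Y = {}"
  shows "p \<subseteq> X \<union> Y"
proof -
  have f: "finite p" using assms(1) card.infinite by fastforce
  have d: "(p \<inter> X) \<inter> (p \<inter> Y) = {}" using assms(4) by blast
  have "card (p \<inter> (X \<union> Y)) = 2"
    using card_Un_disjoint[OF _ _ d] f assms(2,3) by (simp add: Int_Un_distrib)
  then have "p \<inter> (X \<union> Y) = p" using card_subset_eq[OF f, of "p \<inter> (X \<union> Y)"] assms(1) by auto
  then show ?thesis by blast
qed


lemma good_uncross:
  assumes "X \<subseteq> V \<and> Y \<subseteq> V \<and> X \<inter> Y = {} \<and> A1 \<subseteq> X \<and> B1 \<subseteq> Y \<and> (\<forall>p\<in>T'. P p \<longrightarrow> p \<inter> (X \<union> Y) = {})"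
    and "U \<subseteq> V \<and> I \<subseteq> V \<and> U \<inter> I = {} \<and> A1 \<subseteq> U \<and> B1 \<subseteq> I \<and> (\<forall>p\<in>T'. P p \<longrightarrow> p \<inter> (U \<union> I) = {})"
  shows "(X \<union> U) \<subseteq> V \<and> (Y \<inter> I) \<subseteq> V \<and> (X \<union> U) \<inter> (Y \<inter> I) = {} \<and> A1 \<subseteq> (X \<union> U) \<and> B1 \<subseteq> (Y \<inter> I) \<and> (\<forall>p\<in>T'. P p \<longrightarrow> p \<inter> ((X \<union> U) \<union> (Y \<inter> I)) = {})"
    and "(X \<inter> U) \<subseteq> V \<and> (Y \<union> I) \<subseteq> V \<and> (X \<inter> U) \<inter> (Y \<union> I) = {} \<and> A1 \<subseteq> (X \<inter> U) \<and> B1 \<subseteq> (Y \<union> I) \<and> (\<forall>p\<in>T'. P p \<longrightarrow> p \<inter> ((X \<inter> U) \<union> (Y \<union> I)) = {})"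
proof -
  have a: "X \<subseteq> V" "Y \<subseteq> V" "X \<inter> Y = {}" "A1 \<subseteq> X" "B1 \<subseteq> Y" "\<And>p. p\<in>T' \<Longrightarrow> P p \<Longrightarrow> p \<inter> (X \<union> Y) = {}"
    using assms(1) by auto
  have b: "U \<subseteq> V" "I \<subseteq> V" "U \<inter> I = {}" "A1 \<subseteq> U" "B1 \<subseteq> I" "\<And>p. p\<in>T' \<Longrightarrow> P p \<Longrightarrow> p \<inter> (U \<union> I) = {}"
    using assms(2) by auto
  have c: "p \<inter> ((X \<union> U) \<union> (Y \<inter> I)) = {}" "p \<inter> ((X \<inter> U) \<union> (Y \<union> I)) = {}" if "p\<in>T'" "P p" for p
    using a(6)[OF that] b(6)[OF that] by blast+
  have d: "(X \<union> U) \<inter> (Y \<inter> I) = {}" "(X \<inter> U) \<inter> (Y \<union> I) = {}" using a(3) b(3) by blast+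
  show "(X \<union> U) \<subseteq> V \<and> (Y \<inter> I) \<subseteq> V \<and> (X \<union> U) \<inter> (Y \<inter> I) = {} \<and> A1 \<subseteq> (X \<union> U) \<and> B1 \<subseteq> (Y \<inter> I) \<and> (\<forall>p\<in>T'. P p \<longrightarrow> p \<inter> ((X \<union> U) \<union> (Y \<inter> I)) = {})"
    using a b c d by auto
  show "(X \<inter> U) \<subseteq> V \<and> (Y \<union> I) \<subseteq> V \<and> (X \<inter> U) \<inter> (Y \<union> I) = {} \<and> A1 \<subseteq> (X \<inter> U) \<and> B1 \<subseteq> (Y \<union> I) \<and> (\<forall>p\<in>T'. P p \<longrightarrow> p \<inter> ((X \<inter> U) \<union> (Y \<union> I)) = {})"
    using a b c d by auto
qed

theorem lemma5p4:
  fixes V :: "'a set" and E :: "'a set multiset" and T :: "'a set set"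
    and A0 B0 :: "'a set" and k :: nat and s t :: 'a
  defines "T' \<equiv> {p \<in> T. p \<inter> (A0 \<union> B0) = {}}"
  defines "F \<equiv> min_max_seps V T E (A0 \<union> {s}) (B0 \<union> {t})"
  assumes inst: "TS_instance V E T A0 B0 k"
    and st: "{s, t} \<in> T'"
    and hyp: "\<forall>(A', B') \<in> F. \<forall>p \<in> T'. p \<noteq> {s, t} \<longrightarrow> \<not> p \<subseteq> A' \<union> B'"
  shows "(\<exists>!(Am, Bm). (Am, Bm) \<in> F \<and> (\<forall>(As, Bt) \<in> F. As \<subseteq> Am \<and> Bm \<subseteq> Bt))
    \<and> (\<forall>Am Bm. (Am, Bm) \<in> F \<and> (\<forall>(As, Bt) \<in> F. As \<subseteq> Am \<and> Bm \<subseteq> Bt) \<longrightarrow>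
         (\<forall>A. A \<subseteq> V \<and> A0 \<union> {s} \<subseteq> A \<and> A \<inter> B0 = {} \<and> A \<inter> \<Union>T' \<subseteq> {s} \<and> A - Am \<noteq> {}
              \<longrightarrow> dcut E A > dcut E Am))"
proof -
  have gr: "graph V E" and tf: "terminal_family V T" and sep0: "terminal_sep V T A0 B0"
    using inst unfolding TS_instance_def by auto
  have E2: "\<forall>e \<in># E. card e = 2" using gr unfolding graph_def by auto
  have fV: "finite V" using gr unfolding graph_def by auto
  have stT: "{s,t} \<in> T" and stdisj: "{s,t} \<inter> (A0 \<union> B0) = {}" using st unfolding T'_def by auto
  have "card {s,t} = 2" using tf stT unfolding terminal_family_def by auto
  then have sne: "s \<noteq> t" by (cases "s = t") auto
  have sV: "s \<in> V" "t \<in> V" using tf stT unfolding terminal_family_def by auto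
  have disjT: "\<And>p. p \<in> T \<Longrightarrow> p \<noteq> {s,t} \<Longrightarrow> p \<inter> {s,t} = {}"
    using tf stT unfolding terminal_family_def by auto
  have card2T: "\<And>p. p \<in> T \<Longrightarrow> card p = 2" using tf unfolding terminal_family_def by auto
  have A0V: "A0 \<subseteq> V" "B0 \<subseteq> V" "A0 \<inter> B0 = {}" using sep0 unfolding terminal_sep_def by auto
  define A1 where "A1 = A0 \<union> {s}"
  define B1 where "B1 = B0 \<union> {t}"
  define S where "S = {(X,Y). terminal_sep V T X Y \<and> A1 \<subseteq> X \<and> B1 \<subseteq> Y}"
  have finS: "finite S"
  proof (rule finite_subset)
    show "S \<subseteq> Pow V \<times> Pow V" unfolding S_def terminal_sep_def by auto
    show "finite (Pow V \<times> Pow V)" using fV by auto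
  qed
  define good where "good = (\<lambda>X Y. X \<subseteq> V \<and> Y \<subseteq> V \<and> X \<inter> Y = {} \<and> A1 \<subseteq> X \<and> B1 \<subseteq> Y \<and>
      (\<forall>p\<in>T'. p \<noteq> {s,t} \<longrightarrow> p \<inter> (X \<union> Y) = {}))"
  have good_S: "(X,Y) \<in> S" if g: "good X Y" for X Y
  proof -
    have gX: "X \<subseteq> V" "Y \<subseteq> V" "X \<inter> Y = {}" "A1 \<subseteq> X" "B1 \<subseteq> Y"
      and gp: "\<And>p. p\<in>T' \<Longrightarrow> p \<noteq> {s,t} \<Longrightarrow> p \<inter> (X \<union> Y) = {}"
      using g unfolding good_def by auto
    have "card (p \<inter> X) = 1 \<and> card (p \<inter> Y) = 1 \<or> p \<inter> (X \<union> Y) = {}" if pT: "p \<in> T" for p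
    proof (cases "p = {s,t}")
      case True
      have "s \<in> X" "t \<in> Y" using gX unfolding A1_def B1_def by auto
      then have "p \<inter> X = {s}" "p \<inter> Y = {t}" using True gX(3) by auto
      then show ?thesis by simp
    next
      case False
      show ?thesis
      proof (cases "p \<in> T'")
        case True then show ?thesis using gp False by auto
      next
        case nT: False
        then have "p \<inter> (A0 \<union> B0) \<noteq> {}" using pT unfolding T'_def by auto
        then have c1: "card (p \<inter> A0) = 1" "card (p \<inter> B0) = 1"
          using sep0 pT unfolding terminal_sep_def by auto
        have pc: "p \<subseteq> A0 \<union> B0" using pair_cover[OF card2T[OF pT] c1 A0V(3)] .
        have "A0 \<subseteq> X" "B0 \<subseteq> Y" using gX unfolding A1_def B1_def by auto
        then have "p \<inter> X = p \<inter> A0" "p \<inter> Y = p \<inter> B0" using pc gX(3) by auto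
        then show ?thesis using c1 by simp
      qed
    qed
    then show ?thesis unfolding S_def terminal_sep_def using gX by auto
  qed
  have A1B1: "(A1, B1) \<in> S"
  proof -
    have "good A1 B1" unfolding good_def
    proof (intro conjI ballI impI)
      show "A1 \<subseteq> V" "B1 \<subseteq> V" using A0V sV unfolding A1_def B1_def by auto
      show "A1 \<inter> B1 = {}" using A0V stdisj sne unfolding A1_def B1_def by auto
      fix p assume "p \<in> T'" "p \<noteq> {s,t}"
      then have "p \<inter> {s,t} = {}" "p \<inter> (A0 \<union> B0) = {}" using disjT unfolding T'_def by auto
      then show "p \<inter> (A1 \<union> B1) = {}" unfolding A1_def B1_def by auto
    qed auto
    then show ?thesis using good_S by auto
  qed
  define c where "c = Min ((\<lambda>(X,Y). cost E X Y) ` S)"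
  have cmin: "c \<le> cost E X Y" if "(X,Y) \<in> S" for X Y
    unfolding c_def using finS that by (metis (mono_tags, lifting) Min_le case_prod_conv finite_imageI image_eqI)
  have "c \<in> (\<lambda>(X,Y). cost E X Y) ` S" unfolding c_def using finS A1B1 by (intro Min_in) auto
  then obtain X0 Y0 where X0: "(X0,Y0) \<in> S" "cost E X0 Y0 = c" by auto
  have Fchar: "(X,Y) \<in> F \<longleftrightarrow> maximal_sep V T E X Y \<and> (X,Y) \<in> S \<and> cost E X Y = c" for X Y
  proof
    assume "(X,Y) \<in> F"
    then have m: "maximal_sep V T E X Y" "A1 \<subseteq> X" "B1 \<subseteq> Y"
      and le: "\<forall>A'' B''. terminal_sep V T A'' B'' \<and> A1 \<subseteq> A'' \<and> B1 \<subseteq> B'' \<longrightarrow> cost E X Y \<le> cost E A'' B''"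
      unfolding F_def min_max_seps_def A1_def B1_def by auto
    have inS: "(X,Y) \<in> S" using m unfolding S_def maximal_sep_def by auto
    have "cost E X Y \<le> c" using le X0 unfolding S_def by auto
    with cmin[OF inS] m inS show "maximal_sep V T E X Y \<and> (X,Y) \<in> S \<and> cost E X Y = c" by auto
  next
    assume a: "maximal_sep V T E X Y \<and> (X,Y) \<in> S \<and> cost E X Y = c"
    then show "(X,Y) \<in> F" using cmin unfolding F_def min_max_seps_def S_def A1_def B1_def by auto
  qed
  have Ext: "\<exists>X2 Y2. (X2,Y2) \<in> F \<and> X \<subseteq> X2 \<and> Y \<subseteq> Y2" if XY: "(X,Y) \<in> S" "cost E X Y = c" for X Y
  proof -
    define R where "R = {(X2,Y2). (X2,Y2) \<in> S \<and> X \<subseteq> X2 \<and> Y \<subseteq> Y2 \<and> cost E X2 Y2 = c}"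
    have "finite R" using finS unfolding R_def by (rule rev_finite_subset) auto
    moreover have "R \<noteq> {}" using XY unfolding R_def by auto
    ultimately obtain m where m: "is_arg_min (\<lambda>(a,b). - (int (card a) + int (card b))) (\<lambda>x. x \<in> R) m"
      using ex_is_arg_min_if_finite by blast
    obtain X2 Y2 where mm: "m = (X2,Y2)" by fastforce
    have mR: "(X2,Y2) \<in> R" using m mm unfolding is_arg_min_def by auto
    have mx: "\<not> card X2 + card Y2 < card A' + card B'" if "(A',B') \<in> R" for A' B'
      using m mm that unfolding is_arg_min_def by fastforce
    have X2S: "(X2,Y2) \<in> S" "cost E X2 Y2 = c" "X \<subseteq> X2" "Y \<subseteq> Y2" using mR unfolding R_def by auto
    have "maximal_sep V T E X2 Y2"
      unfolding maximal_sep_def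
    proof (intro conjI allI impI)
      show "terminal_sep V T X2 Y2" using X2S unfolding S_def by auto
      fix A' B' assume a: "terminal_sep V T A' B' \<and> X2 \<subseteq> A' \<and> Y2 \<subseteq> B' \<and> (A', B') \<noteq> (X2, Y2)"
      have A'S: "(A',B') \<in> S" using a X2S unfolding S_def by auto
      show "cost E X2 Y2 < cost E A' B'"
      proof (rule ccontr)
        assume "\<not> cost E X2 Y2 < cost E A' B'"
        then have "cost E A' B' = c" using cmin[OF A'S] X2S by auto
        then have "(A',B') \<in> R" using A'S a X2S unfolding R_def by auto
        note mx[OF this]
        moreover have "A' \<subseteq> V" "B' \<subseteq> V" using a unfolding terminal_sep_def by auto
        then have "finite A'" "finite B'" using fV finite_subset by auto
        then have "card X2 \<le> card A'" "card Y2 \<le> card B'" using a card_mono by auto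
        moreover have "card X2 < card A' \<or> card Y2 < card B'"
          using a \<open>finite A'\<close> \<open>finite B'\<close> psubset_card_mono by blast
        ultimately show False by linarith
      qed
    qed
    then have "(X2,Y2) \<in> F" using Fchar X2S by auto
    then show ?thesis using X2S by auto
  qed
  have S_good: "good X Y" if XY: "(X,Y) \<in> S" "cost E X Y = c" for X Y
  proof -
    obtain X2 Y2 where F2: "(X2,Y2) \<in> F" "X \<subseteq> X2" "Y \<subseteq> Y2" using Ext[OF XY] by auto
    have sep2: "terminal_sep V T X2 Y2" using F2 Fchar unfolding S_def by auto
    have "p \<inter> (X \<union> Y) = {}" if p: "p \<in> T'" "p \<noteq> {s,t}" for p
    proof -
      have "\<not> p \<subseteq> X2 \<union> Y2" using hyp F2(1) p by auto
      moreover have "p \<in> T" using p unfolding T'_def by auto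
      ultimately have "p \<inter> (X2 \<union> Y2) = {}"
        using sep2 pair_cover[OF card2T] unfolding terminal_sep_def by blast
      then show ?thesis using F2 by auto
    qed
    then show ?thesis using XY unfolding good_def S_def terminal_sep_def by auto
  qed
  have uncross: "good (X \<union> U) (Y \<inter> I) \<and> cost E (X \<union> U) (Y \<inter> I) = c \<and>
      good (X \<inter> U) (Y \<union> I) \<and> cost E (X \<inter> U) (Y \<union> I) = c"
    if g: "good X Y" "cost E X Y = c" "good U I" "cost E U I = c" for X Y U I
  proof -
    have g1: "good (X \<union> U) (Y \<inter> I)" "good (X \<inter> U) (Y \<union> I)" unfolding good_def
      by (rule good_uncross(1)[OF g(1)[unfolded good_def] g(3)[unfolded good_def]],
          rule good_uncross(2)[OF g(1)[unfolded good_def] g(3)[unfolded good_def]])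
    have c1: "c \<le> cost E (X \<union> U) (Y \<inter> I)" "c \<le> cost E (X \<inter> U) (Y \<union> I)"
      using cmin good_S g1 by auto
    have "dcut E (X \<union> U) + dcut E (X \<inter> U) \<le> dcut E X + dcut E U"
       "dcut E (Y \<union> I) + dcut E (Y \<inter> I) \<le> dcut E Y + dcut E I" using dcut_sub[OF E2] by auto
    then have "real (dcut E (X \<union> U)) + real (dcut E (X \<inter> U)) \<le> real (dcut E X) + real (dcut E U)"
       "real (dcut E (Y \<union> I)) + real (dcut E (Y \<inter> I)) \<le> real (dcut E Y) + real (dcut E I)"
      by (metis of_nat_add of_nat_le_iff)+
    then have "cost E (X \<union> U) (Y \<inter> I) + cost E (X \<inter> U) (Y \<union> I) \<le> cost E X Y + cost E U I"
      unfolding cost_def by (simp add: field_simps)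
    then show ?thesis using g1 c1 g by linarith
  qed
  have Fgood: "good X Y \<and> cost E X Y = c" if "(X,Y) \<in> F" for X Y
    using that Fchar S_good by auto
  have finF: "finite F"
    using finS by (rule rev_finite_subset) (auto simp: Fchar)
  have FneE: "F \<noteq> {}" using Ext[OF X0] by auto
  have big: "good (\<Union>(fst ` G)) (\<Inter>(snd ` G)) \<and> cost E (\<Union>(fst ` G)) (\<Inter>(snd ` G)) = c"
    if "finite G" "G \<noteq> {}" "G \<subseteq> F" for G
    using that
  proof (induction G rule: finite_ne_induct)
    case (singleton x)
    then show ?case using Fgood[of "fst x" "snd x"] by auto
  next
    case (insert x G)
    then have ih: "good (\<Union>(fst ` G)) (\<Inter>(snd ` G)) \<and> cost E (\<Union>(fst ` G)) (\<Inter>(snd ` G)) = c" by auto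
    have gx: "good (fst x) (snd x) \<and> cost E (fst x) (snd x) = c" using insert Fgood[of "fst x" "snd x"] by auto
    show ?case using uncross[of "fst x" "snd x" "\<Union>(fst ` G)" "\<Inter>(snd ` G)"] ih gx by simp
  qed
  define Am where "Am = \<Union>(fst ` F)"
  define Bm where "Bm = \<Inter>(snd ` F)"
  have gm: "good Am Bm" "cost E Am Bm = c" using big[OF finF FneE] unfolding Am_def Bm_def by auto
  have dom: "\<forall>(As, Bt) \<in> F. As \<subseteq> Am \<and> Bm \<subseteq> Bt" unfolding Am_def Bm_def by force
  have AmF: "(Am, Bm) \<in> F"
  proof -
    have "maximal_sep V T E Am Bm"
      unfolding maximal_sep_def
    proof (intro conjI allI impI)
      show "terminal_sep V T Am Bm" using good_S gm unfolding S_def by auto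
      fix A' B' assume a: "terminal_sep V T A' B' \<and> Am \<subseteq> A' \<and> Bm \<subseteq> B' \<and> (A', B') \<noteq> (Am, Bm)"
      have A'S: "(A',B') \<in> S" using a good_S[OF gm(1)] unfolding S_def by auto
      show "cost E Am Bm < cost E A' B'"
      proof (rule ccontr)
        assume "\<not> cost E Am Bm < cost E A' B'"
        then have cA: "cost E A' B' = c" using cmin[OF A'S] gm by auto
        then have gA: "good A' B'" using S_good A'S by auto
        have "B' \<subseteq> Y" if XY: "(X,Y) \<in> F" for X Y
        proof -
          have "X \<subseteq> A'" using XY a unfolding Am_def by force
          then have eq: "A' \<inter> X = X" by auto
          have u: "good X (B' \<union> Y) \<and> cost E X (B' \<union> Y) = c"
            using uncross[OF gA cA Fgood[OF XY, THEN conjunct1] Fgood[OF XY, THEN conjunct2]] eq by simp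
          have mX: "maximal_sep V T E X Y" using XY Fchar by auto
          have "terminal_sep V T X (B' \<union> Y)" using good_S[of X "B' \<union> Y"] u unfolding S_def by auto
          then have "(X, B' \<union> Y) = (X,Y)"
            using mX u Fgood[OF XY] unfolding maximal_sep_def by fastforce
          then show ?thesis by auto
        qed
        then have "B' \<subseteq> Bm" unfolding Bm_def by (metis INF_greatest prod.collapse)
        then have "B' = Bm" "A' \<noteq> Am" using a by auto
        then have ps: "Am \<subset> A'" using a by auto
        obtain X2 Y2 where "(X2,Y2) \<in> F" "A' \<subseteq> X2" using Ext[OF A'S cA] by auto
        then have "A' \<subseteq> Am" unfolding Am_def by force
        then show False using ps by auto
      qed
    qed
    then show ?thesis using Fchar good_S gm by auto
  qed
  have part1: "\<exists>!(Am, Bm). (Am, Bm) \<in> F \<and> (\<forall>(As, Bt) \<in> F. As \<subseteq> Am \<and> Bm \<subseteq> Bt)"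
  proof (rule ex1I[of _ "(Am,Bm)"])
    show "case (Am, Bm) of (Am, Bm) \<Rightarrow> (Am, Bm) \<in> F \<and> (\<forall>(As, Bt)\<in>F. As \<subseteq> Am \<and> Bm \<subseteq> Bt)"
      using AmF dom by simp
    fix y assume y: "case y of (Am, Bm) \<Rightarrow> (Am, Bm) \<in> F \<and> (\<forall>(As, Bt)\<in>F. As \<subseteq> Am \<and> Bm \<subseteq> Bt)"
    obtain A2 B2 where yy: "y = (A2,B2)" by fastforce
    have "A2 \<subseteq> Am" "Bm \<subseteq> B2" using y yy dom by auto
    moreover have "Am \<subseteq> A2" "B2 \<subseteq> Bm" using y yy AmF by auto
    ultimately show "y = (Am, Bm)" using yy by auto
  qed
  have part2: "dcut E A > dcut E Am2"
    if m2: "(Am2, Bm2) \<in> F" "\<forall>(As, Bt) \<in> F. As \<subseteq> Am2 \<and> Bm2 \<subseteq> Bt"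
      and A: "A \<subseteq> V" "A0 \<union> {s} \<subseteq> A" "A \<inter> B0 = {}" "A \<inter> \<Union>T' \<subseteq> {s}" "A - Am2 \<noteq> {}" for Am2 Bm2 A
  proof -
    have g2: "good Am2 Bm2" "cost E Am2 Bm2 = c" using Fgood m2(1) by auto
    have tT: "t \<in> \<Union>T'" using st by auto
    have tA: "t \<notin> A" using A(4) tT sne by auto
    have pA: "p \<inter> A = {}" if "p \<in> T'" "p \<noteq> {s,t}" for p
    proof -
      have "p \<inter> {s,t} = {}" using disjT that unfolding T'_def by auto
      then show ?thesis using A(4) that by blast
    qed
    have gm2: "Am2 \<subseteq> V" "Bm2 \<subseteq> V" "Am2 \<inter> Bm2 = {}" "A1 \<subseteq> Am2" "B1 \<subseteq> Bm2"
      "\<And>p. p\<in>T' \<Longrightarrow> p \<noteq> {s,t} \<Longrightarrow> p \<inter> (Am2 \<union> Bm2) = {}"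
      using g2(1) unfolding good_def by auto
    have gA: "good A (Bm2 - A)" unfolding good_def
    proof (intro conjI ballI impI)
      show "A \<subseteq> V" "Bm2 - A \<subseteq> V" "A \<inter> (Bm2 - A) = {}" "A1 \<subseteq> A" using A(1,2) gm2(2) unfolding A1_def by auto
      show "B1 \<subseteq> Bm2 - A" using gm2(5) A(3) tA unfolding B1_def by auto
      fix p assume "p \<in> T'" "p \<noteq> {s,t}"
      then show "p \<inter> (A \<union> (Bm2 - A)) = {}" using pA gm2(6) by auto
    qed
    have gA2: "good (A - Bm2) Bm2" unfolding good_def
    proof (intro conjI ballI impI)
      show "A - Bm2 \<subseteq> V" "Bm2 \<subseteq> V" "(A - Bm2) \<inter> Bm2 = {}" "B1 \<subseteq> Bm2" using A(1) gm2(2,5) by auto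
      show "A1 \<subseteq> A - Bm2" using A(2) gm2(3,4) unfolding A1_def by auto
      fix p assume "p \<in> T'" "p \<noteq> {s,t}"
      then show "p \<inter> ((A - Bm2) \<union> Bm2) = {}" using pA gm2(6) by auto
    qed
    have c1: "cost E A (Bm2 - A) > c"
    proof (rule ccontr)
      assume "\<not> cost E A (Bm2 - A) > c"
      then have "cost E A (Bm2 - A) = c" using cmin good_S[OF gA] by fastforce
      then obtain X2 Y2 where "(X2,Y2) \<in> F" "A \<subseteq> X2" using Ext good_S[OF gA] by blast
      then have "A \<subseteq> Am2" using m2(2) by blast
      then show False using A(5) by auto
    qed
    have c2: "cost E (A - Bm2) Bm2 \<ge> c" using cmin good_S[OF gA2] by auto
    have "dcut E (A - Bm2) + dcut E (Bm2 - A) \<le> dcut E A + dcut E Bm2" using dcut_posi[OF E2] .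
    then have "real (dcut E (A - Bm2)) + real (dcut E (Bm2 - A)) \<le> real (dcut E A) + real (dcut E Bm2)"
      by (metis of_nat_add of_nat_le_iff)
    moreover have "real (dcut E A) + real (dcut E (Bm2 - A)) > 2 * c" using c1 unfolding cost_def by simp
    moreover have "real (dcut E (A - Bm2)) + real (dcut E Bm2) \<ge> 2 * c" using c2 unfolding cost_def by simp
    moreover have "real (dcut E Am2) + real (dcut E Bm2) = 2 * c" using g2 unfolding cost_def by simp
    ultimately have "real (dcut E A) > real (dcut E Am2)" by linarith
    then show ?thesis by simp
  qed
  show ?thesis
  proof (intro conjI allI impI)
    show "\<exists>!(Am, Bm). (Am, Bm) \<in> F \<and> (\<forall>(As, Bt) \<in> F. As \<subseteq> Am \<and> Bm \<subseteq> Bt)" by (rule part1)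
    fix Am2 Bm2 A
    assume h1: "(Am2, Bm2) \<in> F \<and> (\<forall>(As, Bt) \<in> F. As \<subseteq> Am2 \<and> Bm2 \<subseteq> Bt)"
      and h2: "A \<subseteq> V \<and> A0 \<union> {s} \<subseteq> A \<and> A \<inter> B0 = {} \<and> A \<inter> \<Union>T' \<subseteq> {s} \<and> A - Am2 \<noteq> {}"
    show "dcut E A > dcut E Am2"
      by (rule part2[OF conjunct1[OF h1] conjunct2[OF h1]]) (use h2 in \<open>simp_all\<close>)
  qed
qed

end
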